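(* Let $p\ne5$ be an odd prime. Then $$(-1)^{[p/4]}\sum_{k=0}^{[p/4]}\binom{4k}{2k}\frac1{80^k}\equiv\begin{cases}\pm1\pmod p&\text{if }p\equiv\pm1\pmod5,\\ \pm\frac12\pmod p&\text{if }p\equiv\pm2\pmod5.\end{cases}$$
   Context: $[x]$ is the greatest integer $\le x$. *)

theory Defs
  imports Complex_Main "HOL-Computational_Algebra.Primes"
begin

text \<open>Congruence of rationals modulo an integer m: x \<equiv> y (mod m) iff the
  reduced numerator of x - y is divisible by m (equivalently x - y = a/b with
  m dividing a and b coprime to m).\<close>
definition rat_cong :: "rat \<Rightarrow> rat \<Rightarrow> int \<Rightarrow> bool" where
  "rat_cong x y m \<longleftrightarrow> m dvd fst (quotient_of (x - y))"

end

theory Submission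
  imports Defs "HOL-Computational_Algebra.Polynomial"
begin

lemma frob2:
  fixes a b :: "'a::comm_ring_1"
  assumes "prime p"
  shows "\<exists>u. (a+b)^p = a^p + b^p + of_nat p * u"
proof -
  have p1: "p \<ge> 1" using assms prime_ge_1_nat by blast
  have "(a+b)^p = (\<Sum>k\<le>p. of_nat (p choose k) * a^k * b^(p-k))"
    by (rule binomial_ring)
  also have "{..p} = insert 0 (insert p {1..<p})" using p1 by auto
  also have "(\<Sum>k\<in>insert 0 (insert p {1..<p}). of_nat (p choose k) * a^k * b^(p-k))
     = b^p + (a^p + (\<Sum>k\<in>{1..<p}. of_nat (p choose k) * a^k * b^(p-k)))"
    using p1 by (subst sum.insert; auto)+
  also have "(\<Sum>k\<in>{1..<p}. of_nat (p choose k) * a^k * b^(p-k))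
     = of_nat p * (\<Sum>k\<in>{1..<p}. of_nat ((p choose k) div p) * a^k * b^(p-k))"
    unfolding sum_distrib_left
  proof (rule sum.cong)
    fix k assume k: "k \<in> {1..<p}"
    have "p dvd (p choose k)" using k assms by (intro dvd_choose_prime) auto
    then have "p choose k = p * ((p choose k) div p)" by simp
    then show "of_nat (p choose k) * a^k * b^(p-k) = of_nat p * (of_nat ((p choose k) div p) * a^k * b^(p-k))"
      by (metis (no_types, lifting) mult.assoc of_nat_mult)
  qed simp
  finally show ?thesis by (intro exI[of _ "\<Sum>k\<in>{1..<p}. of_nat ((p choose k) div p) * a^k * b^(p-k)"]) (simp add: algebra_simps)
qed

lemma fermat_nat_aux:
  assumes "prime p"
  shows "int p dvd (int a)^p - int a"
proof (induction a)
  case 0 then show ?case using assms prime_gt_0_nat by (simp add: power_0_left)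
next
  case (Suc a)
  obtain u where u: "(int a + 1)^p = (int a)^p + 1^p + of_nat p * u"
    using frob2[OF assms] by blast
  have e: "int (Suc a) = int a + 1" by simp
  have "(int (Suc a))^p - int (Suc a) = ((int a)^p - int a) + int p * u"
    unfolding e u by simp
  then show ?case using Suc by (metis dvd_add dvd_triv_left)
qed

lemma fermat_int:
  assumes "prime p" "odd p"
  shows "int p dvd (a::int)^p - a"
proof (cases "a \<ge> 0")
  case True
  have h: "int p dvd (int (nat a))^p - int (nat a)" by (rule fermat_nat_aux[OF assms(1)])
  have "int (nat a) = a" using True by simp
  then show ?thesis using h by (simp only:)
next
  case False
  have "int p dvd (int (nat (-a)))^p - int (nat (-a))" by (rule fermat_nat_aux[OF assms(1)])
  then have "int p dvd (-a)^p - (-a)" using False by simp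
  also have "(-a)^p - (-a) = - (a^p - a)" using assms(2) by (simp add: power_minus_odd)
  finally show ?thesis by (simp only: dvd_minus_iff)
qed

definition XX :: "int poly" where "XX = [:0,1:]"
definition FF :: "int poly" where "FF = XX^8 - XX^6 + XX^4 - XX^2 + 1"

definition cg :: "nat \<Rightarrow> int poly \<Rightarrow> int poly \<Rightarrow> bool" where
  "cg p a b \<longleftrightarrow> (\<exists>u v. a - b = of_nat p * u + FF * v)"

lemma cg_refl[simp]: "cg p a a"
  unfolding cg_def by (intro exI[of _ 0]) simp

lemma cg_sym: "cg p a b \<Longrightarrow> cg p b a"
  unfolding cg_def
  by (metis (no_types, opaque_lifting) add_uminus_conv_diff minus_add_distrib minus_diff_eq mult_minus_right)

lemma cg_trans[trans]: "cg p a b \<Longrightarrow> cg p b c \<Longrightarrow> cg p a c"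
proof -
  assume "cg p a b" "cg p b c"
  then obtain u v u' v' where "a - b = of_nat p * u + FF * v" "b - c = of_nat p * u' + FF * v'"
    unfolding cg_def by blast
  then have "a - c = of_nat p * (u+u') + FF * (v+v')" by (simp add: algebra_simps)
  then show ?thesis unfolding cg_def by blast
qed

lemma cg_add: "cg p a b \<Longrightarrow> cg p c d \<Longrightarrow> cg p (a+c) (b+d)"
proof -
  assume "cg p a b" "cg p c d"
  then obtain u v u' v' where "a - b = of_nat p * u + FF * v" "c - d = of_nat p * u' + FF * v'"
    unfolding cg_def by blast
  then have "(a+c) - (b+d) = of_nat p * (u+u') + FF * (v+v')" by (simp add: algebra_simps)
  then show ?thesis unfolding cg_def by blast
qed

lemma cg_minus: "cg p a b \<Longrightarrow> cg p (-a) (-b)"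
proof -
  assume "cg p a b"
  then obtain u v where "a - b = of_nat p * u + FF * v" unfolding cg_def by blast
  then have "(-a) - (-b) = of_nat p * (-u) + FF * (-v)" by (simp add: algebra_simps)
  then show ?thesis unfolding cg_def by blast
qed

lemma cg_diff: "cg p a b \<Longrightarrow> cg p c d \<Longrightarrow> cg p (a-c) (b-d)"
  using cg_add[of p a b "-c" "-d"] cg_minus by fastforce

lemma cg_mult: "cg p a b \<Longrightarrow> cg p c d \<Longrightarrow> cg p (a*c) (b*d)"
proof -
  assume "cg p a b" "cg p c d"
  then obtain u v u' v' where h: "a - b = of_nat p * u + FF * v" "c - d = of_nat p * u' + FF * v'"
    unfolding cg_def by blast
  have "a*c - b*d = (a-b)*c + b*(c-d)" by (simp add: algebra_simps)
  also have "\<dots> = of_nat p * (u*c + b*u') + FF * (v*c+b*v')" unfolding h by (simp add: algebra_simps)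
  finally show ?thesis unfolding cg_def by blast
qed

lemma cg_power: "cg p a b \<Longrightarrow> cg p (a^k) (b^k)"
  by (induction k) (auto intro: cg_mult)

lemma cg_FF: "a - b = FF * v \<Longrightarrow> cg p a b"
  unfolding cg_def by (intro exI[of _ 0] exI[of _ v]) simp

lemma cg_P: "a - b = of_nat p * u \<Longrightarrow> cg p a b"
  unfolding cg_def by (intro exI[of _ u] exI[of _ 0]) simp

lemma cg_const: "int p dvd (c - d) \<Longrightarrow> cg p [:c:] [:d:]"
proof -
  assume "int p dvd (c - d)"
  then obtain k where "c - d = int p * k" by blast
  then have "[:c:] - [:d:] = of_nat p * [:k:]"
    by (simp add: of_nat_poly)
  then show ?thesis by (rule cg_P)
qed

lemma pCons_XX: "pCons a h = [:a:] + XX * h"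
  unfolding XX_def by simp

lemma frob_poly:
  assumes "prime p" "odd p"
  shows "cg p (g^p) (pcompose g (XX^p))"
proof (induction g)
  case 0 then show ?case using assms prime_gt_0_nat by (simp add: power_0_left)
next
  case (pCons a h)
  obtain u where u: "([:a:] + XX*h)^p = [:a:]^p + (XX*h)^p + of_nat p * u"
    using frob2[OF assms(1)] by blast
  have c1: "cg p ([:a:]^p) [:a:]"
    using cg_const[OF fermat_int[OF assms, of a]] by (simp add: poly_const_pow)
  have c2: "cg p ((XX*h)^p) (XX^p * pcompose h (XX^p))"
    unfolding power_mult_distrib by (rule cg_mult[OF cg_refl pCons.IH])
  have e: "(pCons a h)^p = ([:a:] + XX*h)^p" using pCons_XX[of a h] by simp
  have "cg p ((pCons a h)^p) ([:a:]^p + (XX*h)^p)"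
    unfolding e u by (rule cg_P[of _ _ _ u]) simp
  also have "cg p ([:a:]^p + (XX*h)^p) ([:a:] + XX^p * pcompose h (XX^p))"
    by (rule cg_add[OF c1 c2])
  finally show ?case by (simp add: pcompose_pCons)
qed

lemma XX_pow_monom: "XX^k = monom 1 k"
  unfolding XX_def by (simp add: monom_altdef)

lemma coeff_FF: "coeff FF 8 = 1" "\<And>i. i > 8 \<Longrightarrow> coeff FF i = 0" "coeff FF 0 = 1"
  unfolding FF_def XX_pow_monom by (auto simp: coeff_monom)

lemma coeff_ofnat_mult: "coeff (of_nat p * u) k = int p * coeff (u::int poly) k"
  by (simp add: of_nat_poly)

lemma extract_const:
  assumes "cg p [:c:] 0"
  shows "int p dvd c"
proof -
  obtain u v where uv: "[:c:] = of_nat p * u + FF * v"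
    using assms unfolding cg_def by auto
  have D: "\<forall>k. degree v < k + m \<longrightarrow> int p dvd coeff v k" for m
  proof (induction m)
    case 0 then show ?case by (simp add: coeff_eq_0)
  next
    case (Suc m)
    show ?case
    proof (intro allI impI)
      fix k assume k: "degree v < k + Suc m"
      have big: "int p dvd coeff v j" if "j > k" for j
        using Suc.IH k that by auto
      define g where "g i = coeff FF i * coeff v (k+8-i)" for i
      have "coeff [:c:] (k+8) = int p * coeff u (k+8) + coeff (FF*v) (k+8)"
        by (subst uv) (simp add: coeff_ofnat_mult)
      moreover have "coeff [:c:] (k+8) = 0" by (simp add: coeff_pCons')
      ultimately have e1: "0 = int p * coeff u (k+8) + (\<Sum>i\<le>k+8. g i)"
        by (simp add: coeff_mult g_def)
      have "(\<Sum>i\<le>k+8. g i) = g 8 + (\<Sum>i\<in>{..k+8}-{8}. g i)"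
        by (subst sum.remove[of _ 8]) auto
      also have "g 8 = coeff v k" by (simp add: g_def coeff_FF)
      finally have e2: "(\<Sum>i\<le>k+8. g i) = coeff v k + (\<Sum>i\<in>{..k+8}-{8}. g i)" .
      have "int p dvd (\<Sum>i\<in>{..k+8}-{8}. g i)"
      proof (rule dvd_sum)
        fix i assume i: "i \<in> {..k+8}-{8}"
        show "int p dvd g i"
        proof (cases "i > 8")
          case True then show ?thesis by (simp add: g_def coeff_FF)
        next
          case False
          then have "i < 8" using i by auto
          then have "int p dvd coeff v (k+8-i)" by (intro big) auto
          then show ?thesis by (simp add: g_def)
        qed
      qed
      then obtain R where R: "(\<Sum>i\<in>{..k+8}-{8}. g i) = int p * R" by blast
      have "coeff v k = - (int p * coeff u (k+8)) - int p * R"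
        using e1 e2 R by linarith
      then show "int p dvd coeff v k" by simp
    qed
  qed
  have v0: "int p dvd coeff v 0" using D[of "Suc (degree v)"] by auto
  have "coeff [:c:] 0 = int p * coeff u 0 + coeff (FF*v) 0"
    by (subst uv) (simp add: coeff_ofnat_mult)
  then have "c = int p * coeff u 0 + coeff v 0" by (simp add: coeff_mult coeff_FF)
  then show ?thesis using v0 by simp
qed

lemma id20: "(x::'a::idom)^20 - 1 = (x^8 - x^6 + x^4 - x^2 + 1) * ((x^10 - 1) * (x^2+1))"
  by algebra

lemma XX20: "cg p (XX^20) 1"
  by (rule cg_FF[of _ _ "(XX^10 - 1) * (XX^2+1)"]) (unfold FF_def, rule id20)

lemma XX_mod: "cg p (XX^k) (XX^(k mod 20))"
proof -
  have "XX^k = XX^(20 * (k div 20) + k mod 20)" by simp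
  also have "\<dots> = (XX^20)^(k div 20) * XX^(k mod 20)"
    by (simp only: power_add power_mult)
  also have "cg p \<dots> (1^(k div 20) * XX^(k mod 20))"
    by (intro cg_mult cg_power XX20 cg_refl)
  finally show ?thesis by simp
qed

lemma cg_sum: "finite A \<Longrightarrow> (\<And>k. k \<in> A \<Longrightarrow> cg p (f k) (g k)) \<Longrightarrow> cg p (\<Sum>k\<in>A. f k) (\<Sum>k\<in>A. g k)"
  by (induction A rule: finite_induct) (auto intro: cg_add)

lemma extract_int:
  assumes "cg p (of_int c) (of_int d)"
  shows "int p dvd c - d"
proof -
  have "cg p (of_int c - of_int d) (of_int d - of_int d)"
    by (rule cg_diff[OF assms cg_refl])
  then have "cg p [:c - d:] 0" by (simp add: of_int_poly)
  then show ?thesis by (rule extract_const)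
qed

lemma sum_even_part:
  fixes g :: "nat \<Rightarrow> 'a::comm_monoid_add"
  shows "(\<Sum>k\<le>n. if even k then g k else 0) = (\<Sum>j\<le>n div 2. g (2*j))"
proof (induction n)
  case 0 then show ?case by simp
next
  case (Suc n)
  show ?case
  proof (cases "even (Suc n)")
    case True
    then have "Suc n div 2 = Suc (n div 2)" by (metis Suc_n_div_2_gt_zero div2_Suc_Suc even_Suc_div_two odd_Suc_div_two odd_two_times_div_two_succ)
    moreover have "2 * Suc (n div 2) = Suc n" using True by (metis \<open>Suc n div 2 = Suc (n div 2)\<close> even_two_times_div_two)
    ultimately show ?thesis using Suc True by simp
  next
    case False
    then have "Suc n div 2 = n div 2" by simp
    then show ?thesis using Suc False by simp
  qed
qed

lemma binom_pm:
  fixes e :: "'a::comm_ring_1"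
  shows "(e+1)^n + (e-1)^n = 2 * (\<Sum>k\<le>n div 2. of_nat (n choose (2*k)) * e^(n - 2*k))"
proof -
  have a: "(e+1)^n = (\<Sum>k\<le>n. of_nat (n choose k) * 1^k * e^(n-k))"
    using binomial_ring[of 1 e n] by (simp add: add.commute)
  have b: "(e-1)^n = (\<Sum>k\<le>n. of_nat (n choose k) * (-1)^k * e^(n-k))"
    using binomial_ring[of "-1" e n] by (simp add: add.commute)
  have "(e+1)^n + (e-1)^n = (\<Sum>k\<le>n. if even k then 2 * (of_nat (n choose k) * e^(n-k)) else 0)"
    unfolding a b sum.distrib[symmetric] by (intro sum.cong) auto
  also have "\<dots> = (\<Sum>j\<le>n div 2. 2 * (of_nat (n choose (2*j)) * e^(n-2*j)))"
    by (rule sum_even_part)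
  finally show ?thesis by (simp add: sum_distrib_left)
qed

lemma choose_step: "n \<ge> 1 \<Longrightarrow> Suc k * (n choose Suc k) = (n - k) * (n choose k)"
proof -
  assume "n \<ge> 1"
  then obtain n' where n: "n = Suc n'" by (cases n) auto
  have "Suc k * (Suc n' choose Suc k) = Suc n' * (n' choose k)" by (rule Suc_times_binomial)
  also have "\<dots> = (Suc n' - k) * (Suc n' choose k)" using binomial_absorb_comp[of "Suc n'" k] by simp
  finally show ?thesis unfolding n .
qed

lemma central_step: "Suc m * (2*Suc m choose Suc m) = 2*(2*m+1)*(2*m choose m)"
proof -
  have e1: "Suc m * (Suc (Suc (2*m)) choose Suc m) = Suc (Suc (2*m)) * (Suc (2*m) choose m)"
    by (rule Suc_times_binomial)
  have e2: "Suc m * (Suc (2*m) choose Suc m) = Suc (2*m) * (2*m choose m)"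
    by (rule Suc_times_binomial)
  have e3: "(Suc (2*m) choose m) = (Suc (2*m) choose Suc m)"
    using binomial_symmetric[of m "Suc (2*m)"] by (simp del: binomial_Suc_Suc)
  have X: "2*Suc m = Suc (Suc (2*m))" by simp
  have "Suc m * (Suc m * (2*Suc m choose Suc m)) = Suc m * (Suc (Suc (2*m)) * (Suc (2*m) choose m))"
    unfolding X e1 ..
  also have "\<dots> = Suc (Suc (2*m)) * (Suc m * (Suc (2*m) choose Suc m))" unfolding e3 by (simp only: ac_simps)
  also have "\<dots> = Suc (Suc (2*m)) * (Suc (2*m) * (2*m choose m))" by (simp only: e2)
  also have "\<dots> = Suc m * (2*(2*m+1)*(2*m choose m))" by (simp del: binomial_Suc_Suc add: algebra_simps)
  finally have h: "Suc m * (Suc m * (2*Suc m choose Suc m)) = Suc m * (2*(2*m+1)*(2*m choose m))" .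
  show ?thesis using h by (subst (asm) mult_left_cancel) (simp_all del: binomial_Suc_Suc)
qed

lemma bin_cong:
  assumes p: "prime p" "p = 2*n+1" and "m \<le> n"
  shows "int p dvd int (2*m choose m) - (-4)^m * int (n choose m)"
  using assms(3)
proof (induction m)
  case 0 then show ?case by simp
next
  case (Suc m)
  define A where "A = int (2*m choose m)"
  define B where "B = int (n choose m)"
  have IH: "int p dvd A - (-4)^m * B" using Suc unfolding A_def B_def by simp
  have n1: "n \<ge> 1" using Suc.prems by simp
  have ea: "int (Suc m) * int (2*Suc m choose Suc m) = 2*(2*int m+1)*A"
    using arg_cong[OF central_step[of m], of int] unfolding A_def by (simp add: algebra_simps del: binomial_Suc_Suc)
  have eb: "int (Suc m) * int (n choose Suc m) = (int n - int m) * B"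
    using arg_cong[OF choose_step[OF n1, of m], of int] Suc.prems unfolding B_def
    by (simp add: of_nat_diff algebra_simps del: binomial_Suc_Suc)
  have "int (Suc m) * (int (2*Suc m choose Suc m) - (-4)^Suc m * int (n choose Suc m))
      = 2*(2*int m+1)*(A - (-4)^m*B) + (-4)^m * B * int p * 2"
    unfolding ring_distribs ea mult.left_commute[of "int (Suc m)" "(-4)^Suc m"] eb
    by (simp add: algebra_simps p(2))
  moreover have "int p dvd 2*(2*int m+1)*(A - (-4)^m*B) + (-4)^m * B * int p * 2"
    using IH by (intro dvd_add) auto
  ultimately have "int p dvd int (Suc m) * (int (2*Suc m choose Suc m) - (-4)^Suc m * int (n choose Suc m))"
    by simp
  moreover have "\<not> int p dvd int (Suc m)"
  proof
    assume "int p dvd int (Suc m)"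
    then have "p dvd Suc m" by (simp only: of_nat_dvd_iff)
    then have "p \<le> Suc m" by (rule dvd_imp_le) simp
    then show False using Suc.prems p by simp
  qed
  ultimately show ?case using p(1) by (simp add: prime_dvd_mult_iff)
qed

definition EPS :: "int poly" where "EPS = XX^4 - XX^8 - XX^12 + XX^16"
definition YY :: "int poly" where "YY = 2*XX^9 - 2*XX^21"
definition YP :: "int poly" where "YP = 2*XX^13 - 2*XX^17"

lemma idI1: "((x::'a::idom)^4 - x^8 - x^12 + x^16)^2 - 5 = (x^8 - x^6 + x^4 - x^2 + 1) *
  ((-5)*1 + (-5)*x^2 + x^8 + (6)*x^10 + (3)*x^12 + (-2)*x^14 - x^16 + (-2)*x^18 + (-2)*x^20 + x^22 + x^24)"
  by algebra
lemma idI2: "(2*(x::'a::idom)^9 - 2*x^21)^2 - 2*(x^4 - x^8 - x^12 + x^16)*((x^4 - x^8 - x^12 + x^16)+1) = (x^8 - x^6 + x^4 - x^2 + 1) *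
  ((-2)*x^4 + (-2)*x^6 + (6)*x^12 + (8)*x^14 + (2)*x^16 + (4)*x^18 + (-4)*x^20 + (-14)*x^22 + (-6)*x^24 + (4)*x^32 + (4)*x^34)"
  by algebra
lemma idI3: "(2*(x::'a::idom)^13 - 2*x^17)^2 - 2*(x^4 - x^8 - x^12 + x^16)*((x^4 - x^8 - x^12 + x^16)-1) = (x^8 - x^6 + x^4 - x^2 + 1) *
  ((2)*x^4 + (2)*x^6 + (-4)*x^8 + (-4)*x^10 + (2)*x^12 + (2)*x^16 + (8)*x^18 + (-4)*x^20 + (-10)*x^22 + (2)*x^24 + (4)*x^26)"
  by algebra
lemma idI4: "(2*(x::'a::idom)^9 - 2*x^21)*(2*x^13 - 2*x^17) - 4*(x^4 - x^8 - x^12 + x^16) = (x^8 - x^6 + x^4 - x^2 + 1) *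
  ((-4)*x^4 + (-4)*x^6 + (4)*x^8 + (4)*x^10 + (4)*x^12 + (8)*x^14 + (-8)*x^18 + (-4)*x^20 + (-4)*x^24 + (-4)*x^26 + (4)*x^28 + (4)*x^30)"
  by algebra
lemma idI6: "(x::'a::idom)^10 + 1 = (x^8 - x^6 + x^4 - x^2 + 1) * (1 + x^2)"
  by algebra

lemma EPS2: "cg p (EPS^2) 5"
  unfolding EPS_def by (rule cg_FF, unfold FF_def, rule idI1)
lemma YY2: "cg p (YY^2) (2*EPS*(EPS+1))"
  unfolding EPS_def YY_def by (rule cg_FF, unfold FF_def, rule idI2)
lemma YP2: "cg p (YP^2) (2*EPS*(EPS-1))"
  unfolding EPS_def YP_def by (rule cg_FF, unfold FF_def, rule idI3)
lemma YYYP: "cg p (YY*YP) (4*EPS)"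
  unfolding EPS_def YY_def YP_def by (rule cg_FF, unfold FF_def, rule idI4)
lemma XX10: "cg p (XX^10) (-1)"
  by (rule cg_FF[of _ _ "1 + XX^2"], unfold FF_def, simp only: diff_minus_eq_add, rule idI6)

lemma p_shape:
  assumes "odd (p::nat)"
  shows "p = 2*((p-1) div 2) + 1" "(p-1) div 2 = 2*(p div 4) + ((p-1) div 2 - 2*(p div 4))"
        "(p-1) div 2 - 2*(p div 4) \<le> 1"
  using assms by (auto elim!: oddE)

lemma chain_main:
  assumes pr: "prime p" and od: "odd p"
  defines "n \<equiv> (p-1) div 2" and "N \<equiv> p div 4"
  defines "r \<equiv> n - 2*N"
  defines "U \<equiv> (\<Sum>k\<le>N. int (n choose (2*k)) * 5^(N-k))"
  shows "cg p (YY^p*YP + YP^p*YY) (of_int (8*2^n*5^(N+r)*U) * EPS)"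
proof -
  have pn: "p = 2*n+1" and nN: "n = 2*N + r" and r1: "r \<le> 1"
    using p_shape[OF od] unfolding n_def N_def r_def by auto
  have ndiv: "n div 2 = N" using nN r1 by auto
  have a1: "cg p (YY^p) ((2*EPS*(EPS+1))^n * YY)"
  proof -
    have "YY^p = (YY^2)^n * YY" by (simp add: pn power_add power_mult)
    then show ?thesis by (metis YY2 cg_mult cg_power cg_refl)
  qed
  have a2: "cg p (YP^p) ((2*EPS*(EPS-1))^n * YP)"
  proof -
    have "YP^p = (YP^2)^n * YP" by (simp add: pn power_add power_mult)
    then show ?thesis by (metis YP2 cg_mult cg_power cg_refl)
  qed
  have "cg p (YY^p*YP + YP^p*YY) ((2*EPS*(EPS+1))^n * YY * YP + (2*EPS*(EPS-1))^n * YP * YY)"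
    by (intro cg_add cg_mult a1 a2 cg_refl)
  also have "(2*EPS*(EPS+1))^n * YY * YP + (2*EPS*(EPS-1))^n * YP * YY
      = 2^n * EPS^n * ((EPS+1)^n + (EPS-1)^n) * (YY*YP)"
    by (simp only: power_mult_distrib) (simp add: algebra_simps)
  also have "(EPS+1)^n + (EPS-1)^n = 2 * (\<Sum>k\<le>N. of_nat (n choose (2*k)) * EPS^(n - 2*k))"
    using binom_pm[of EPS n] unfolding ndiv .
  also have "cg p (2^n * EPS^n * (2 * (\<Sum>k\<le>N. of_nat (n choose (2*k)) * EPS^(n - 2*k))) * (YY*YP))
     (2^n * EPS^n * (2 * (\<Sum>k\<le>N. of_nat (n choose (2*k)) * (5^(N-k) * EPS^r))) * (4*EPS))"
  proof (intro cg_mult[OF _ YYYP] cg_mult cg_refl cg_sum)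
    fix k assume k: "k \<in> {..N}"
    have "EPS^(n-2*k) = (EPS^2)^(N-k) * EPS^r"
      using k nN by (simp add: power_mult[symmetric] power_add[symmetric] algebra_simps)
    moreover have "cg p ((EPS^2)^(N-k) * EPS^r) (5^(N-k) * EPS^r)"
      by (intro cg_mult cg_power EPS2 cg_refl)
    ultimately show "cg p (EPS^(n-2*k)) (5^(N-k) * EPS^r)"
      by simp
  qed simp
  also have "2^n * EPS^n * (2 * (\<Sum>k\<le>N. of_nat (n choose (2*k)) * (5^(N-k) * EPS^r))) * (4*EPS)
      = 8 * 2^n * of_int U * (EPS^2)^(N+r) * EPS"
  proof -
    have "(\<Sum>k\<le>N. of_nat (n choose (2*k)) * (5^(N-k) * EPS^r)) = of_int U * EPS^r"
      unfolding U_def by (simp add: sum_distrib_right sum_distrib_left algebra_simps)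
    moreover have "EPS^n * EPS^r * EPS = (EPS^2)^(N+r) * EPS"
      using nN by (simp add: power_mult[symmetric] power_add[symmetric] algebra_simps)
    ultimately show ?thesis by (auto simp: algebra_simps)
  qed
  also have "cg p (8 * 2^n * of_int U * (EPS^2)^(N+r) * EPS) (8 * 2^n * of_int U * 5^(N+r) * EPS)"
    by (intro cg_mult cg_power EPS2 cg_refl)
  also have "8 * 2^n * of_int U * 5^(N+r) * EPS = of_int (8*2^n*5^(N+r)*U) * EPS"
    by (simp add: algebra_simps)
  finally show ?thesis .
qed

lemma pcompose_XX: "pcompose XX q = q"
  unfolding XX_def by (simp add: pcompose_pCons)

lemma pcompose_XX_pow: "pcompose (XX^k) q = q^k"
  by (induction k) (simp_all add: pcompose_mult pcompose_XX pcompose_1)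

lemma pcompose_num: "pcompose (numeral m) q = numeral m"
  by (metis of_nat_numeral of_nat_poly pcompose_const)

lemma XX_mod': "cg p (XX^k) (XX^m) \<Longrightarrow> cg p (XX^k) (XX^(m mod 20))"
  by (rule cg_trans[OF _ XX_mod])

lemma frob_YY:
  assumes "prime p" "odd p"
  shows "cg p (YY^p) (2*XX^(9*p mod 20) - 2*XX^(21*p mod 20))"
proof -
  have "cg p (YY^p) (pcompose YY (XX^p))" by (rule frob_poly[OF assms])
  also have "pcompose YY (XX^p) = 2*XX^(9*p) - 2*XX^(21*p)"
    unfolding YY_def by (simp add: pcompose_diff pcompose_mult pcompose_XX_pow pcompose_num power_mult[symmetric] mult.commute)
  also have "cg p \<dots> (2*XX^(9*p mod 20) - 2*XX^(21*p mod 20))"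
    by (intro cg_diff cg_mult cg_refl XX_mod)
  finally show ?thesis .
qed

lemma frob_YP:
  assumes "prime p" "odd p"
  shows "cg p (YP^p) (2*XX^(13*p mod 20) - 2*XX^(17*p mod 20))"
proof -
  have "cg p (YP^p) (pcompose YP (XX^p))" by (rule frob_poly[OF assms])
  also have "pcompose YP (XX^p) = 2*XX^(13*p) - 2*XX^(17*p)"
    unfolding YP_def by (simp add: pcompose_diff pcompose_mult pcompose_XX_pow pcompose_num power_mult[symmetric] mult.commute)
  also have "cg p \<dots> (2*XX^(13*p mod 20) - 2*XX^(17*p mod 20))"
    by (intro cg_diff cg_mult cg_refl XX_mod)
  finally show ?thesis .
qed

lemma frob_EPS:
  assumes "prime p" "odd p"
  shows "cg p (of_int (5^((p-1) div 2)) * EPS) (XX^(4*p mod 20) - XX^(8*p mod 20) - XX^(12*p mod 20) + XX^(16*p mod 20))"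
proof -
  define n where "n = (p-1) div 2"
  have pn: "p = 2*n+1" using p_shape[OF assms(2)] unfolding n_def by auto
  have "of_int (5^n) * EPS = 5^n * EPS" by simp
  also have "cg p (5^n * EPS) ((EPS^2)^n * EPS)"
    by (intro cg_mult cg_power cg_sym[OF EPS2] cg_refl)
  also have "(EPS^2)^n * EPS = EPS^p" by (simp add: pn power_add power_mult)
  also have "cg p (EPS^p) (pcompose EPS (XX^p))" by (rule frob_poly[OF assms])
  also have "pcompose EPS (XX^p) = XX^(4*p) - XX^(8*p) - XX^(12*p) + XX^(16*p)"
    unfolding EPS_def by (simp add: pcompose_diff pcompose_add pcompose_XX_pow power_mult[symmetric] mult.commute)
  also have "cg p \<dots> (XX^(4*p mod 20) - XX^(8*p mod 20) - XX^(12*p mod 20) + XX^(16*p mod 20))"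
    by (intro cg_diff cg_add cg_refl XX_mod)
  finally show ?thesis unfolding n_def .
qed

definition ZZ :: "int poly" where "ZZ = 1 + XX^5"

lemma ZZ2: "cg p (ZZ^2) (2*XX^5)"
proof -
  have "ZZ^2 = XX^10 + 2*XX^5 + 1" unfolding ZZ_def by (simp add: power2_eq_square algebra_simps power_add[symmetric])
  also have "cg p \<dots> (-1 + 2*XX^5 + 1)" by (intro cg_add XX10 cg_refl)
  finally show ?thesis by simp
qed

lemma XX10_pow: "cg p (XX^(10*N)) ((-1)^N)"
  unfolding power_mult by (intro cg_power XX10)

lemma two_part:
  assumes pr: "prime p" and od: "odd p"
  defines "n \<equiv> (p-1) div 2" and "N \<equiv> p div 4"
  defines "r \<equiv> n - 2*N"
  shows "int p dvd 2^n * (-1)^N - (-1)^r"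
proof -
  have pn: "p = 2*n+1" and nN: "n = 2*N + r" and r1: "r \<le> 1"
    using p_shape[OF od] unfolding n_def N_def r_def by auto
  have zp: "cg p (ZZ^p) (2^n * (-1)^N * XX^(5*r) * ZZ)"
  proof -
    have "ZZ^p = (ZZ^2)^n * ZZ" by (simp add: pn power_add power_mult)
    also have "cg p \<dots> ((2*XX^5)^n * ZZ)" by (intro cg_mult cg_power ZZ2 cg_refl)
    also have "(2*XX^5)^n * ZZ = 2^n * XX^(10*N) * XX^(5*r) * ZZ"
      by (simp add: power_mult_distrib nN power_add[symmetric] power_mult[symmetric] algebra_simps)
    also have "cg p \<dots> (2^n * (-1)^N * XX^(5*r) * ZZ)"
      by (intro cg_mult XX10_pow cg_refl)
    finally show ?thesis .
  qed
  have zf: "cg p (ZZ^p) (1 + XX^(5*p))"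
  proof -
    have "cg p (ZZ^p) (pcompose ZZ (XX^p))" by (rule frob_poly[OF pr od])
    also have "pcompose ZZ (XX^p) = 1 + XX^(5*p)"
      unfolding ZZ_def by (simp add: pcompose_add pcompose_1 pcompose_XX_pow power_mult[symmetric] mult.commute)
    finally show ?thesis .
  qed
  have key: "cg p (of_int (2 * (2^n * (-1)^N))) (of_int (2 * (-1)^r))"
  proof (cases "r = 0")
    case True
    have p5: "cg p (XX^(5*p)) (XX^5)"
    proof -
      have "5*p = 20*N + 5" using pn nN True by simp
      then have "XX^(5*p) = (XX^20)^N * XX^5" by (simp only: power_add power_mult)
      also have "cg p \<dots> (1^N * XX^5)" by (intro cg_mult cg_power XX20 cg_refl)
      finally show ?thesis by simp
    qed
    have "cg p (2^n * (-1)^N * ZZ) ZZ"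
    proof -
      have "cg p (2^n * (-1)^N * ZZ) (2^n * (-1)^N * XX^(5*r) * ZZ)" using True by simp
      also have "cg p \<dots> (ZZ^p)" by (rule cg_sym[OF zp])
      also have "cg p \<dots> (1 + XX^5)" by (rule cg_trans[OF zf cg_add[OF cg_refl p5]])
      finally show ?thesis unfolding ZZ_def .
    qed
    then have "cg p (2^n * (-1)^N * ZZ * (1 - XX^5)) (ZZ * (1 - XX^5))" by (rule cg_mult[OF _ cg_refl])
    then have "cg p (2^n * (-1)^N * (ZZ * (1 - XX^5))) (ZZ * (1 - XX^5))" by (simp only: mult.assoc)
    moreover have "cg p (ZZ * (1 - XX^5)) 2"
    proof -
      have "ZZ * (1 - XX^5) = 1 - XX^10" unfolding ZZ_def by (simp add: algebra_simps power_add[symmetric])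
      also have "cg p \<dots> (1 - (-1))" by (intro cg_diff XX10 cg_refl)
      finally show ?thesis by simp
    qed
    ultimately have "cg p (2^n * (-1)^N * 2) 2"
      by (meson cg_mult cg_refl cg_sym cg_trans)
    then show ?thesis using True by (simp add: algebra_simps)
  next
    case False
    then have r: "r = 1" using r1 by simp
    have p5: "cg p (XX^(5*p)) (-(XX^5))"
    proof -
      have "5*p = 20*N + 10 + 5" using pn nN r by simp
      then have "XX^(5*p) = (XX^20)^N * XX^10 * XX^5" by (simp only: power_add power_mult)
      also have "cg p \<dots> (1^N * (-1) * XX^5)" by (intro cg_mult cg_power XX20 XX10 cg_refl)
      finally show ?thesis by simp
    qed
    have h: "cg p (2^n * (-1)^N * XX^5 * ZZ) (1 - XX^5)"
    proof -
      have "cg p (2^n * (-1)^N * XX^5 * ZZ) (ZZ^p)" using cg_sym[OF zp] r by simp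
      also have "cg p \<dots> (1 + (-(XX^5)))" by (rule cg_trans[OF zf cg_add[OF cg_refl p5]])
      finally show ?thesis by simp
    qed
    have "cg p (2^n * (-1)^N * XX^5 * ZZ * ZZ) ((1 - XX^5) * ZZ)"
      by (rule cg_mult[OF h cg_refl])
    moreover have "cg p (2^n * (-1)^N * XX^5 * ZZ * ZZ) (- (2 * (2^n * (-1)^N)))"
    proof -
      have "2^n * (-1)^N * XX^5 * ZZ * ZZ = 2^n * (-1)^N * XX^5 * ZZ^2" by (simp add: power2_eq_square)
      also have "cg p \<dots> (2^n * (-1)^N * XX^5 * (2*XX^5))" by (intro cg_mult ZZ2 cg_refl)
      also have "2^n * (-1)^N * XX^5 * (2*XX^5) = 2 * (2^n * (-1)^N) * XX^10"
        by (simp add: algebra_simps power_add[symmetric])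
      also have "cg p \<dots> (2 * (2^n * (-1)^N) * (-1))" by (intro cg_mult XX10 cg_refl)
      finally show ?thesis by simp
    qed
    moreover have "cg p ((1 - XX^5) * ZZ) 2"
    proof -
      have "(1 - XX^5) * ZZ = 1 - XX^10" unfolding ZZ_def by (simp add: algebra_simps power_add[symmetric])
      also have "cg p \<dots> (1 - (-1))" by (intro cg_diff XX10 cg_refl)
      finally show ?thesis by simp
    qed
    ultimately have "cg p (- (2 * (2^n * (-1)^N))) 2"
      by (meson cg_sym cg_trans)
    then have "cg p (- (- (2 * (2^n * (-1)^N)))) (-2)" by (rule cg_minus)
    then show ?thesis using r by simp
  qed
  have "int p dvd 2 * (2^n * (-1)^N) - 2 * (-1)^r" by (rule extract_int[OF key])
  moreover have "2 * (2^n * (-1)^N) - 2 * (-1)^r = 2 * (2^n * (-1)^N - (-1)^r :: int)"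
    by (simp only: right_diff_distrib)
  ultimately have d2: "int p dvd 2 * (2^n * (-1)^N - (-1)^r)" by (simp only:)
  have nd2: "\<not> int p dvd 2"
  proof
    assume "int p dvd 2"
    then have "p dvd 2" by (metis of_nat_dvd_iff of_nat_numeral)
    then have "p \<le> 2" by (rule dvd_imp_le) simp
    moreover have "p \<ge> 2" using pr prime_ge_2_nat by blast
    ultimately show False using od by simp
  qed
  have pi: "prime (int p)" using pr by simp
  show ?thesis using prime_dvd_multD[OF pi d2] nd2 by blast
qed

lemma idG1: "(2*(x::'a::idom)^9 - 2*x^1)*(2*x^13 - 2*x^17) + (2*x^13 - 2*x^17)*(2*x^9 - 2*x^21) - (8)*(x^4 - x^8 - x^12 + x^16) = (x^8 - x^6 + x^4 - x^2 + 1) * ((-8)*x^4 + (-8)*x^6 + (8)*x^8 + (8)*x^10 + (8)*x^12 + (12)*x^14 + (-4)*x^16 + (-12)*x^18 + (-4)*x^20 + (-4)*x^24 + (-4)*x^26 + (4)*x^28 + (4)*x^30)"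
  by algebra

lemma G1:
  assumes "prime p" "odd p" "p mod 20 = 1"
  shows "cg p (YY^p*YP + YP^p*YY) (of_int (8) * EPS)"
proof -
  have m: "9*p mod 20 = 9" "21*p mod 20 = 1" "13*p mod 20 = 13" "17*p mod 20 = 17"
    using assms(3) by (simp_all add: mod_mult_right_eq[symmetric])
  have "cg p (YY^p*YP + YP^p*YY) ((2*XX^9 - 2*XX^1)*YP + (2*XX^13 - 2*XX^17)*YY)"
    using cg_add[OF cg_mult[OF frob_YY[OF assms(1,2)] cg_refl] cg_mult[OF frob_YP[OF assms(1,2)] cg_refl]] unfolding m .
  also have "cg p ((2*XX^9 - 2*XX^1)*YP + (2*XX^13 - 2*XX^17)*YY) (of_int (8) * EPS)"
    by (rule cg_FF, unfold YY_def YP_def EPS_def FF_def, simp only: of_int_minus of_int_numeral of_int_1, rule idG1)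
  finally show ?thesis .
qed

lemma idG3: "(2*(x::'a::idom)^7 - 2*x^3)*(2*x^13 - 2*x^17) + (2*x^19 - 2*x^11)*(2*x^9 - 2*x^21) - (-4)*(x^4 - x^8 - x^12 + x^16) = (x^8 - x^6 + x^4 - x^2 + 1) * ((4)*x^4 + (4)*x^6 + (-4)*x^8 + (-4)*x^10 + (-4)*x^12 + (-8)*x^14 + (-4)*x^16 + (4)*x^18 + (8)*x^20 + (8)*x^22 + (4)*x^24 + (-4)*x^30 + (-4)*x^32)"
  by algebra

lemma G3:
  assumes "prime p" "odd p" "p mod 20 = 3"
  shows "cg p (YY^p*YP + YP^p*YY) (of_int (-4) * EPS)"
proof -
  have m: "9*p mod 20 = 7" "21*p mod 20 = 3" "13*p mod 20 = 19" "17*p mod 20 = 11"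
    using assms(3) by (simp_all add: mod_mult_right_eq[symmetric])
  have "cg p (YY^p*YP + YP^p*YY) ((2*XX^7 - 2*XX^3)*YP + (2*XX^19 - 2*XX^11)*YY)"
    using cg_add[OF cg_mult[OF frob_YY[OF assms(1,2)] cg_refl] cg_mult[OF frob_YP[OF assms(1,2)] cg_refl]] unfolding m .
  also have "cg p ((2*XX^7 - 2*XX^3)*YP + (2*XX^19 - 2*XX^11)*YY) (of_int (-4) * EPS)"
    by (rule cg_FF, unfold YY_def YP_def EPS_def FF_def, simp only: of_int_minus of_int_numeral of_int_1, rule idG3)
  finally show ?thesis .
qed

lemma idG7: "(2*(x::'a::idom)^3 - 2*x^7)*(2*x^13 - 2*x^17) + (2*x^11 - 2*x^19)*(2*x^9 - 2*x^21) - (4)*(x^4 - x^8 - x^12 + x^16) = (x^8 - x^6 + x^4 - x^2 + 1) * ((-4)*x^4 + (-4)*x^6 + (4)*x^8 + (4)*x^10 + (4)*x^12 + (8)*x^14 + (4)*x^16 + (-4)*x^18 + (-8)*x^20 + (-8)*x^22 + (-4)*x^24 + (4)*x^30 + (4)*x^32)"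
  by algebra

lemma G7:
  assumes "prime p" "odd p" "p mod 20 = 7"
  shows "cg p (YY^p*YP + YP^p*YY) (of_int (4) * EPS)"
proof -
  have m: "9*p mod 20 = 3" "21*p mod 20 = 7" "13*p mod 20 = 11" "17*p mod 20 = 19"
    using assms(3) by (simp_all add: mod_mult_right_eq[symmetric])
  have "cg p (YY^p*YP + YP^p*YY) ((2*XX^3 - 2*XX^7)*YP + (2*XX^11 - 2*XX^19)*YY)"
    using cg_add[OF cg_mult[OF frob_YY[OF assms(1,2)] cg_refl] cg_mult[OF frob_YP[OF assms(1,2)] cg_refl]] unfolding m .
  also have "cg p ((2*XX^3 - 2*XX^7)*YP + (2*XX^11 - 2*XX^19)*YY) (of_int (4) * EPS)"
    by (rule cg_FF, unfold YY_def YP_def EPS_def FF_def, simp only: of_int_minus of_int_numeral of_int_1, rule idG7)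
  finally show ?thesis .
qed

lemma idG9: "(2*(x::'a::idom)^1 - 2*x^9)*(2*x^13 - 2*x^17) + (2*x^17 - 2*x^13)*(2*x^9 - 2*x^21) - (-8)*(x^4 - x^8 - x^12 + x^16) = (x^8 - x^6 + x^4 - x^2 + 1) * ((8)*x^4 + (8)*x^6 + (-8)*x^8 + (-8)*x^10 + (-8)*x^12 + (-12)*x^14 + (4)*x^16 + (12)*x^18 + (4)*x^20 + (4)*x^24 + (4)*x^26 + (-4)*x^28 + (-4)*x^30)"
  by algebra

lemma G9:
  assumes "prime p" "odd p" "p mod 20 = 9"
  shows "cg p (YY^p*YP + YP^p*YY) (of_int (-8) * EPS)"
proof -
  have m: "9*p mod 20 = 1" "21*p mod 20 = 9" "13*p mod 20 = 17" "17*p mod 20 = 13"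
    using assms(3) by (simp_all add: mod_mult_right_eq[symmetric])
  have "cg p (YY^p*YP + YP^p*YY) ((2*XX^1 - 2*XX^9)*YP + (2*XX^17 - 2*XX^13)*YY)"
    using cg_add[OF cg_mult[OF frob_YY[OF assms(1,2)] cg_refl] cg_mult[OF frob_YP[OF assms(1,2)] cg_refl]] unfolding m .
  also have "cg p ((2*XX^1 - 2*XX^9)*YP + (2*XX^17 - 2*XX^13)*YY) (of_int (-8) * EPS)"
    by (rule cg_FF, unfold YY_def YP_def EPS_def FF_def, simp only: of_int_minus of_int_numeral of_int_1, rule idG9)
  finally show ?thesis .
qed

lemma idG11: "(2*(x::'a::idom)^19 - 2*x^11)*(2*x^13 - 2*x^17) + (2*x^3 - 2*x^7)*(2*x^9 - 2*x^21) - (-8)*(x^4 - x^8 - x^12 + x^16) = (x^8 - x^6 + x^4 - x^2 + 1) * ((8)*x^4 + (8)*x^6 + (-8)*x^8 + (-8)*x^10 + (-4)*x^12 + (-12)*x^14 + (-4)*x^16 + (12)*x^18 + (8)*x^20 + (4)*x^22 + (4)*x^24 + (-4)*x^26 + (-4)*x^28)"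
  by algebra

lemma G11:
  assumes "prime p" "odd p" "p mod 20 = 11"
  shows "cg p (YY^p*YP + YP^p*YY) (of_int (-8) * EPS)"
proof -
  have m: "9*p mod 20 = 19" "21*p mod 20 = 11" "13*p mod 20 = 3" "17*p mod 20 = 7"
    using assms(3) by (simp_all add: mod_mult_right_eq[symmetric])
  have "cg p (YY^p*YP + YP^p*YY) ((2*XX^19 - 2*XX^11)*YP + (2*XX^3 - 2*XX^7)*YY)"
    using cg_add[OF cg_mult[OF frob_YY[OF assms(1,2)] cg_refl] cg_mult[OF frob_YP[OF assms(1,2)] cg_refl]] unfolding m .
  also have "cg p ((2*XX^19 - 2*XX^11)*YP + (2*XX^3 - 2*XX^7)*YY) (of_int (-8) * EPS)"
    by (rule cg_FF, unfold YY_def YP_def EPS_def FF_def, simp only: of_int_minus of_int_numeral of_int_1, rule idG11)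
  finally show ?thesis .
qed

lemma idG13: "(2*(x::'a::idom)^17 - 2*x^13)*(2*x^13 - 2*x^17) + (2*x^9 - 2*x^1)*(2*x^9 - 2*x^21) - (4)*(x^4 - x^8 - x^12 + x^16) = (x^8 - x^6 + x^4 - x^2 + 1) * ((-4)*x^4 + (-4)*x^6 + (4)*x^8 + (8)*x^14 + (-4)*x^18 + (4)*x^20 + (4)*x^22 + (-4)*x^24 + (-4)*x^26)"
  by algebra

lemma G13:
  assumes "prime p" "odd p" "p mod 20 = 13"
  shows "cg p (YY^p*YP + YP^p*YY) (of_int (4) * EPS)"
proof -
  have m: "9*p mod 20 = 17" "21*p mod 20 = 13" "13*p mod 20 = 9" "17*p mod 20 = 1"
    using assms(3) by (simp_all add: mod_mult_right_eq[symmetric])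
  have "cg p (YY^p*YP + YP^p*YY) ((2*XX^17 - 2*XX^13)*YP + (2*XX^9 - 2*XX^1)*YY)"
    using cg_add[OF cg_mult[OF frob_YY[OF assms(1,2)] cg_refl] cg_mult[OF frob_YP[OF assms(1,2)] cg_refl]] unfolding m .
  also have "cg p ((2*XX^17 - 2*XX^13)*YP + (2*XX^9 - 2*XX^1)*YY) (of_int (4) * EPS)"
    by (rule cg_FF, unfold YY_def YP_def EPS_def FF_def, simp only: of_int_minus of_int_numeral of_int_1, rule idG13)
  finally show ?thesis .
qed

lemma idG17: "(2*(x::'a::idom)^13 - 2*x^17)*(2*x^13 - 2*x^17) + (2*x^1 - 2*x^9)*(2*x^9 - 2*x^21) - (-4)*(x^4 - x^8 - x^12 + x^16) = (x^8 - x^6 + x^4 - x^2 + 1) * ((4)*x^4 + (4)*x^6 + (-4)*x^8 + (-8)*x^14 + (4)*x^18 + (-4)*x^20 + (-4)*x^22 + (4)*x^24 + (4)*x^26)"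
  by algebra

lemma G17:
  assumes "prime p" "odd p" "p mod 20 = 17"
  shows "cg p (YY^p*YP + YP^p*YY) (of_int (-4) * EPS)"
proof -
  have m: "9*p mod 20 = 13" "21*p mod 20 = 17" "13*p mod 20 = 1" "17*p mod 20 = 9"
    using assms(3) by (simp_all add: mod_mult_right_eq[symmetric])
  have "cg p (YY^p*YP + YP^p*YY) ((2*XX^13 - 2*XX^17)*YP + (2*XX^1 - 2*XX^9)*YY)"
    using cg_add[OF cg_mult[OF frob_YY[OF assms(1,2)] cg_refl] cg_mult[OF frob_YP[OF assms(1,2)] cg_refl]] unfolding m .
  also have "cg p ((2*XX^13 - 2*XX^17)*YP + (2*XX^1 - 2*XX^9)*YY) (of_int (-4) * EPS)"
    by (rule cg_FF, unfold YY_def YP_def EPS_def FF_def, simp only: of_int_minus of_int_numeral of_int_1, rule idG17)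
  finally show ?thesis .
qed

lemma idG19: "(2*(x::'a::idom)^11 - 2*x^19)*(2*x^13 - 2*x^17) + (2*x^7 - 2*x^3)*(2*x^9 - 2*x^21) - (8)*(x^4 - x^8 - x^12 + x^16) = (x^8 - x^6 + x^4 - x^2 + 1) * ((-8)*x^4 + (-8)*x^6 + (8)*x^8 + (8)*x^10 + (4)*x^12 + (12)*x^14 + (4)*x^16 + (-12)*x^18 + (-8)*x^20 + (-4)*x^22 + (-4)*x^24 + (4)*x^26 + (4)*x^28)"
  by algebra

lemma G19:
  assumes "prime p" "odd p" "p mod 20 = 19"
  shows "cg p (YY^p*YP + YP^p*YY) (of_int (8) * EPS)"
proof -
  have m: "9*p mod 20 = 11" "21*p mod 20 = 19" "13*p mod 20 = 7" "17*p mod 20 = 3"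
    using assms(3) by (simp_all add: mod_mult_right_eq[symmetric])
  have "cg p (YY^p*YP + YP^p*YY) ((2*XX^11 - 2*XX^19)*YP + (2*XX^7 - 2*XX^3)*YY)"
    using cg_add[OF cg_mult[OF frob_YY[OF assms(1,2)] cg_refl] cg_mult[OF frob_YP[OF assms(1,2)] cg_refl]] unfolding m .
  also have "cg p ((2*XX^11 - 2*XX^19)*YP + (2*XX^7 - 2*XX^3)*YY) (of_int (8) * EPS)"
    by (rule cg_FF, unfold YY_def YP_def EPS_def FF_def, simp only: of_int_minus of_int_numeral of_int_1, rule idG19)
  finally show ?thesis .
qed

lemma S1:
  assumes "prime p" "odd p" "p mod 20 = 1"
  shows "cg p (of_int (5^((p-1) div 2)) * EPS) (of_int (1) * EPS)"
proof -
  have m: "4*p mod 20 = 4" "8*p mod 20 = 8" "12*p mod 20 = 12" "16*p mod 20 = 16"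
    using assms(3) by (simp_all add: mod_mult_right_eq[symmetric])
  have e: "XX^4 - XX^8 - XX^12 + XX^16 = of_int (1) * EPS"
    unfolding EPS_def of_int_1 by algebra
  show ?thesis using frob_EPS[OF assms(1,2)] unfolding m e .
qed

lemma S3:
  assumes "prime p" "odd p" "p mod 20 = 3"
  shows "cg p (of_int (5^((p-1) div 2)) * EPS) (of_int (-1) * EPS)"
proof -
  have m: "4*p mod 20 = 12" "8*p mod 20 = 4" "12*p mod 20 = 16" "16*p mod 20 = 8"
    using assms(3) by (simp_all add: mod_mult_right_eq[symmetric])
  have e: "XX^12 - XX^4 - XX^16 + XX^8 = of_int (-1) * EPS"
    unfolding EPS_def of_int_minus of_int_1 by algebra
  show ?thesis using frob_EPS[OF assms(1,2)] unfolding m e .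
qed

lemma S7:
  assumes "prime p" "odd p" "p mod 20 = 7"
  shows "cg p (of_int (5^((p-1) div 2)) * EPS) (of_int (-1) * EPS)"
proof -
  have m: "4*p mod 20 = 8" "8*p mod 20 = 16" "12*p mod 20 = 4" "16*p mod 20 = 12"
    using assms(3) by (simp_all add: mod_mult_right_eq[symmetric])
  have e: "XX^8 - XX^16 - XX^4 + XX^12 = of_int (-1) * EPS"
    unfolding EPS_def of_int_minus of_int_1 by algebra
  show ?thesis using frob_EPS[OF assms(1,2)] unfolding m e .
qed

lemma S9:
  assumes "prime p" "odd p" "p mod 20 = 9"
  shows "cg p (of_int (5^((p-1) div 2)) * EPS) (of_int (1) * EPS)"
proof -
  have m: "4*p mod 20 = 16" "8*p mod 20 = 12" "12*p mod 20 = 8" "16*p mod 20 = 4"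
    using assms(3) by (simp_all add: mod_mult_right_eq[symmetric])
  have e: "XX^16 - XX^12 - XX^8 + XX^4 = of_int (1) * EPS"
    unfolding EPS_def of_int_1 by algebra
  show ?thesis using frob_EPS[OF assms(1,2)] unfolding m e .
qed

lemma S11:
  assumes "prime p" "odd p" "p mod 20 = 11"
  shows "cg p (of_int (5^((p-1) div 2)) * EPS) (of_int (1) * EPS)"
proof -
  have m: "4*p mod 20 = 4" "8*p mod 20 = 8" "12*p mod 20 = 12" "16*p mod 20 = 16"
    using assms(3) by (simp_all add: mod_mult_right_eq[symmetric])
  have e: "XX^4 - XX^8 - XX^12 + XX^16 = of_int (1) * EPS"
    unfolding EPS_def of_int_1 by algebra
  show ?thesis using frob_EPS[OF assms(1,2)] unfolding m e .
qed

lemma S13: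
  assumes "prime p" "odd p" "p mod 20 = 13"
  shows "cg p (of_int (5^((p-1) div 2)) * EPS) (of_int (-1) * EPS)"
proof -
  have m: "4*p mod 20 = 12" "8*p mod 20 = 4" "12*p mod 20 = 16" "16*p mod 20 = 8"
    using assms(3) by (simp_all add: mod_mult_right_eq[symmetric])
  have e: "XX^12 - XX^4 - XX^16 + XX^8 = of_int (-1) * EPS"
    unfolding EPS_def of_int_minus of_int_1 by algebra
  show ?thesis using frob_EPS[OF assms(1,2)] unfolding m e .
qed

lemma S17:
  assumes "prime p" "odd p" "p mod 20 = 17"
  shows "cg p (of_int (5^((p-1) div 2)) * EPS) (of_int (-1) * EPS)"
proof -
  have m: "4*p mod 20 = 8" "8*p mod 20 = 16" "12*p mod 20 = 4" "16*p mod 20 = 12"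
    using assms(3) by (simp_all add: mod_mult_right_eq[symmetric])
  have e: "XX^8 - XX^16 - XX^4 + XX^12 = of_int (-1) * EPS"
    unfolding EPS_def of_int_minus of_int_1 by algebra
  show ?thesis using frob_EPS[OF assms(1,2)] unfolding m e .
qed

lemma S19:
  assumes "prime p" "odd p" "p mod 20 = 19"
  shows "cg p (of_int (5^((p-1) div 2)) * EPS) (of_int (1) * EPS)"
proof -
  have m: "4*p mod 20 = 16" "8*p mod 20 = 12" "12*p mod 20 = 8" "16*p mod 20 = 4"
    using assms(3) by (simp_all add: mod_mult_right_eq[symmetric])
  have e: "XX^16 - XX^12 - XX^8 + XX^4 = of_int (1) * EPS"
    unfolding EPS_def of_int_1 by algebra
  show ?thesis using frob_EPS[OF assms(1,2)] unfolding m e .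
qed

lemma cancel_EPS:
  assumes "prime p" "p \<noteq> 5" "cg p (of_int a * EPS) (of_int b * EPS)"
  shows "int p dvd a - b"
proof -
  have "cg p (of_int a * EPS * EPS) (of_int b * EPS * EPS)" by (rule cg_mult[OF assms(3) cg_refl])
  then have "cg p (of_int a * EPS^2) (of_int b * EPS^2)" by (simp add: power2_eq_square mult.assoc)
  then have "cg p (of_int a * 5) (of_int b * 5)"
    by (meson EPS2 cg_mult cg_refl cg_sym cg_trans)
  then have "cg p (of_int (5*a)) (of_int (5*b))" by (simp add: mult.commute)
  then have d: "int p dvd 5*a - 5*b" by (rule extract_int)
  have pi: "prime (int p)" using assms(1) by simp
  have n5: "\<not> int p dvd 5"
  proof
    assume "int p dvd 5"
    then have "p dvd 5" by (metis of_nat_dvd_iff of_nat_numeral)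
    moreover have "p \<le> 5" using \<open>p dvd 5\<close> by (rule dvd_imp_le) simp
    moreover have "p \<ge> 2" using prime_ge_2_nat[OF assms(1)] .
    ultimately have "p = 2 \<or> p = 3 \<or> p = 4 \<or> p = 5" by auto
    then show False using \<open>p dvd 5\<close> assms(2) by auto
  qed
  have "5*a - 5*b = 5*(a-b)" by simp
  then show ?thesis using prime_dvd_multD[OF pi] d n5 by metis
qed

lemma final_arith:
  fixes aa e ss c sg U K X Y P :: int
  assumes "e*e = 1" "ss*ss = 1" "P dvd 8*aa*(X*Y)*U - K" "P dvd aa*e - ss" "P dvd X*X*Y - sg" "K = 4*ss*c*sg"
  shows "P dvd 4*e*(X*Y)*(2*e*U - c*X)"
proof -
  have "4*e*(X*Y)*(2*e*U - c*X) = e*ss*(8*aa*(X*Y)*U - K) - 8*(X*Y)*U*ss*(aa*e - ss) - 4*e*c*(X*X*Y - sg)"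
    using assms(1,2,6) by algebra
  then show ?thesis using assms(3,4,5) by simp
qed

lemma combine:
  assumes pr: "prime p" and od: "odd p" and p5: "p \<noteq> 5"
  defines "n \<equiv> (p-1) div 2" and "N \<equiv> p div 4"
  defines "r \<equiv> n - 2*N"
  defines "U \<equiv> (\<Sum>k\<le>N. int (n choose (2*k)) * 5^(N-k))"
  assumes hG: "cg p (YY^p*YP + YP^p*YY) (of_int K * EPS)"
    and hS: "cg p (of_int (5^n) * EPS) (of_int sg * EPS)"
    and hK: "K = 4*(-1)^r*c*sg"
  shows "int p dvd 2*(-1)^N*U - c*5^N"
proof -
  have pn: "p = 2*n+1" and nN: "n = 2*N + r" and r1: "r \<le> 1"
    using p_shape[OF od] unfolding n_def N_def r_def by auto
  have "cg p (of_int (8*2^n*5^(N+r)*U) * EPS) (of_int K * EPS)"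
    using cg_trans[OF cg_sym[OF chain_main[OF pr od]] hG] unfolding n_def N_def r_def U_def .
  then have H1: "int p dvd 8*2^n*5^(N+r)*U - K" by (rule cancel_EPS[OF pr p5])
  have H3: "int p dvd 5^n - sg" by (rule cancel_EPS[OF pr p5 hS])
  have H2: "int p dvd 2^n*(-1)^N - (-1)^r" using two_part[OF pr od] unfolding n_def N_def r_def .
  have e5: "(5::int)^n = 5^N*5^N*5^r" by (simp add: nN power_add mult_2)
  have e5': "(5::int)^(N+r) = 5^N*5^r" by (simp add: power_add)
  have "int p dvd 4*(-1)^N*(5^N*5^r)*(2*(-1)^N*U - c*5^N)"
    by (rule final_arith[where aa="2^n" and ss="(-1)^r" and sg=sg and K=K])
       (use H1 H2 H3 hK e5 e5' in \<open>auto simp: mult.assoc\<close>)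
  moreover have pi: "prime (int p)" using pr by simp
  moreover have "\<not> int p dvd 4*(-1)^N*(5^N*5^r)"
  proof
    assume h: "int p dvd 4*(-1)^N*(5^N*5^r)"
    have "int p dvd 2 \<or> int p dvd 5"
    proof -
      have "(4::int)*(-1)^N*(5^N*5^r) = 2^2*((-1)^N*5^(N+r))" by (simp add: power_add)
      then have "int p dvd 2^2*((-1)^N*5^(N+r))" using h by (simp add: mult.assoc)
      then have "int p dvd 2^2 \<or> int p dvd (-1)^N \<or> int p dvd 5^(N+r)"
        using pi by (meson prime_dvd_multD)
      moreover have "\<not> int p dvd (-1)^N"
      proof
        assume "int p dvd (-1)^N"
        then have "int p dvd (-1)^N * (-1)^N" by (rule dvd_mult2)
        then have "int p dvd 1" by (simp add: power_mult_distrib[symmetric])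
        then show False using pi by (metis not_prime_unit)
      qed
      ultimately show ?thesis using pi prime_dvd_power by blast
    qed
    then have "p dvd 2 \<or> p dvd 5" by (metis of_nat_dvd_iff of_nat_numeral)
    moreover have "p \<le> 5" using calculation by (auto dest: dvd_imp_le)
    moreover have "p \<ge> 2" using prime_ge_2_nat[OF pr] .
    ultimately have "p = 2 \<or> p = 3 \<or> p = 4 \<or> p = 5" by auto
    then show False using \<open>p dvd 2 \<or> p dvd 5\<close> p5 od by auto
  qed
  ultimately show ?thesis using prime_dvd_multD by blast
qed

lemma rat_from_int:
  assumes pr: "prime p" and nD: "\<not> int p dvd D" and D0: "D \<noteq> 0" and M: "int p dvd M"
  shows "int p dvd fst (quotient_of (of_int M / of_int D))"
proof -
  obtain a b where q: "quotient_of (of_int M / of_int D) = (a, b)" by (cases "quotient_of (of_int M / of_int D)") auto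
  have e: "(of_int M / of_int D :: rat) = of_int a / of_int b" by (rule quotient_of_div[OF q])
  have b0: "b > 0" by (rule quotient_of_denom_pos[OF q])
  have "(of_int M :: rat) * of_int b = of_int a * of_int D"
    using e b0 D0 by (simp add: field_simps)
  then have "M * b = a * D" by (metis of_int_eq_iff of_int_mult)
  then have "int p dvd a * D" using M by (metis dvd_mult2)
  moreover have "prime (int p)" using pr by simp
  ultimately have "int p dvd a" using nD prime_dvd_multD by blast
  then show ?thesis using q by simp
qed

lemma r_val:
  assumes "odd (p::nat)"
  shows "(p-1) div 2 - 2*(p div 4) = (if p mod 4 = 1 then 0 else 1)"
  using assms by (auto elim!: oddE) presburger+

lemma sum_conv:
  fixes N :: nat
  shows "(\<Sum>k = 0..N. of_nat ((4*k) choose (2*k)) / (80::rat) ^ k)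
       = of_int (\<Sum>k\<le>N. int ((4*k) choose (2*k)) * 80^(N-k)) / 80^N"
proof -
  have "of_int (\<Sum>k\<le>N. int ((4*k) choose (2*k)) * 80^(N-k)) / (80::rat)^N
      = (\<Sum>k\<le>N. of_nat ((4*k) choose (2*k)) * 80^(N-k) / 80^N)"
    by (simp add: sum_divide_distrib)
  also have "\<dots> = (\<Sum>k\<le>N. of_nat ((4*k) choose (2*k)) / (80::rat) ^ k)"
  proof (rule sum.cong)
    fix k assume "k \<in> {..N}"
    then have "(80::rat)^(N-k) = 80^N / 80^k" by (simp add: power_diff)
    then show "of_nat ((4*k) choose (2*k)) * 80^(N-k) / 80^N = of_nat ((4*k) choose (2*k)) / (80::rat) ^ k"
      by simp
  qed simp
  finally show ?thesis by (simp add: atLeast0AtMost)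
qed

lemma bridge:
  assumes pr: "prime p" and od: "odd p"
  defines "n \<equiv> (p-1) div 2" and "N \<equiv> p div 4"
  defines "U \<equiv> (\<Sum>k\<le>N. int (n choose (2*k)) * 5^(N-k))"
  defines "T \<equiv> (\<Sum>k\<le>N. int ((4*k) choose (2*k)) * 80^(N-k))"
  assumes h: "int p dvd 2*(-1)^N*U - c*5^N"
  shows "int p dvd 2*(-1)^N*T - c*80^N"
proof -
  have pn: "p = 2*n+1" and nN: "n = 2*N + (n - 2*N)"
    using p_shape[OF od] unfolding n_def N_def by auto
  have "T - 16^N*U = (\<Sum>k\<le>N. 80^(N-k) * (int ((2*(2*k)) choose (2*k)) - (-4)^(2*k) * int (n choose (2*k))))"
  proof -
    have "16^N*U = (\<Sum>k\<le>N. 80^(N-k) * ((-4)^(2*k) * int (n choose (2*k))))"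
      unfolding U_def sum_distrib_left
    proof (rule sum.cong)
      fix k assume k: "k \<in> {..N}"
      have "(16::int)^N = 16^k * 16^(N-k)" using k by (simp add: power_add[symmetric])
      moreover have "(-4::int)^(2*k) = 16^k" by (simp add: power_mult)
      moreover have "(80::int)^(N-k) = 16^(N-k)*5^(N-k)" by (simp add: power_mult_distrib[symmetric])
      ultimately show "16^N * (int (n choose (2*k)) * 5^(N-k)) = 80^(N-k) * ((-4)^(2*k) * int (n choose (2*k)))"
        by (simp add: algebra_simps)
    qed simp
    then show ?thesis unfolding T_def by (simp add: sum_subtractf algebra_simps mult.commute)
  qed
  moreover have "int p dvd (\<Sum>k\<le>N. 80^(N-k) * (int ((2*(2*k)) choose (2*k)) - (-4)^(2*k) * int (n choose (2*k))))"
  proof (rule dvd_sum)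
    fix k assume k: "k \<in> {..N}"
    have "2*k \<le> n" using k nN by simp
    then show "int p dvd 80^(N-k) * (int ((2*(2*k)) choose (2*k)) - (-4)^(2*k) * int (n choose (2*k)))"
      using bin_cong[OF pr pn \<open>2*k \<le> n\<close>] by (metis dvd_mult)
  qed
  ultimately have d1: "int p dvd T - 16^N*U" by simp
  have "2*(-1)^N*T - c*80^N = 2*(-1)^N*(T - 16^N*U) + 16^N*(2*(-1)^N*U - c*5^N)"
    by (simp add: algebra_simps power_mult_distrib[symmetric])
  then show ?thesis using d1 h by simp
qed

lemma case_apply:
  assumes pr: "prime p" and od: "odd p" and p5: "p \<noteq> 5"
    and hG: "cg p (YY^p*YP + YP^p*YY) (of_int K * EPS)"
    and hS: "cg p (of_int (5^((p-1) div 2)) * EPS) (of_int sg * EPS)"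
    and hK: "K = 4*(if p mod 4 = 1 then 1 else -1)*c*sg"
  shows "int p dvd 2*(-1)^(p div 4)*(\<Sum>k\<le>p div 4. int ((p-1) div 2 choose (2*k)) * 5^(p div 4 - k)) - c*5^(p div 4)"
proof (rule combine[OF pr od p5 hG hS])
  show "K = 4 * (-1) ^ ((p - 1) div 2 - 2 * (p div 4)) * c * sg"
    unfolding r_val[OF od] hK by simp
qed

lemma not_dvd_25:
  assumes "prime p" "odd p" "p \<noteq> 5"
  shows "\<not> int p dvd 2" "\<not> int p dvd 5"
proof -
  have g: "p \<ge> 2" using prime_ge_2_nat[OF assms(1)] .
  show "\<not> int p dvd 2"
  proof
    assume "int p dvd 2"
    then have "p dvd 2" by (metis of_nat_dvd_iff of_nat_numeral)
    then have "p \<le> 2" by (rule dvd_imp_le) simp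
    then show False using g assms(2) by auto
  qed
  show "\<not> int p dvd 5"
  proof
    assume "int p dvd 5"
    then have d: "p dvd 5" by (metis of_nat_dvd_iff of_nat_numeral)
    then have "p \<le> 5" by (rule dvd_imp_le) simp
    then have "p = 2 \<or> p = 3 \<or> p = 4 \<or> p = 5" using g by auto
    then show False using d assms(3) by auto
  qed
qed

lemma mod20_cases: "\<And>s::nat. s < 20 \<Longrightarrow> odd s \<Longrightarrow> s mod 5 \<noteq> 0 \<Longrightarrow> s \<in> {1,3,7,9,11,13,17,19}"
proof -
  fix s :: nat assume h: "s < 20" "odd s" "s mod 5 \<noteq> 0"
  have "s \<in> {..<20}" using h by simp
  then have "s = 19 \<or> s = 18 \<or> s = 17 \<or> s = 16 \<or> s = 15 \<or> s = 14 \<or> s = 13 \<or> s = 12 \<or> s = 11 \<or> s = 10 \<or> s = 9 \<or> s = 8 \<or> s = 7 \<or> s = 6 \<or> s = 5 \<or> s = 4 \<or> s = 3 \<or> s = 2 \<or> s = 1 \<or> s = 0"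
    by (simp add: lessThan_nat_numeral lessThan_Suc lessThan_0)
  then show "s \<in> {1,3,7,9,11,13,17,19}" using h by auto
qed

theorem corollary2p6:
  fixes p :: nat
  assumes "prime p" and "odd p" and "p \<noteq> 5"
  defines "S \<equiv> (-1) ^ (p div 4) *
             (\<Sum>k = 0..p div 4. of_nat ((4*k) choose (2*k)) / (80::rat) ^ k)"
  shows "(p mod 5 = 1 \<longrightarrow> rat_cong S 1 (int p)) \<and>
         (p mod 5 = 4 \<longrightarrow> rat_cong S (-1) (int p)) \<and>
         (p mod 5 = 2 \<longrightarrow> rat_cong S (1/2) (int p)) \<and>
         (p mod 5 = 3 \<longrightarrow> rat_cong S (-1/2) (int p))"
proof -
  note pr = assms(1) and od = assms(2) and p5 = assms(3)
  define N where "N = p div 4"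
  define n where "n = (p-1) div 2"
  define U where "U = (\<Sum>k\<le>N. int (n choose (2*k)) * 5^(N-k))"
  define T where "T = (\<Sum>k\<le>N. int ((4*k) choose (2*k)) * 80^(N-k))"
  have n2: "\<not> int p dvd 2" and n5: "\<not> int p dvd 5" using not_dvd_25[OF pr od p5] by auto
  have pi: "prime (int p)" using pr by simp
  have nD: "\<not> int p dvd 2*80^N"
  proof
    assume "int p dvd 2*80^N"
    also have "(2::int)*80^N = 2 * (2^(4*N) * 5^N)" by (simp add: power_mult power_mult_distrib[symmetric])
    finally have "int p dvd 2 \<or> int p dvd 2^(4*N) \<or> int p dvd 5^N" using pi by (meson prime_dvd_multD)
    then show False using n2 n5 pi prime_dvd_power by blast
  qed
  have gen: "rat_cong S (of_int c / 2) (int p)" if h: "int p dvd 2*(-1)^N*U - c*5^N" for c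
  proof -
    have M: "int p dvd 2*(-1)^N*T - c*80^N"
      using bridge[OF pr od, of c] h unfolding N_def n_def U_def T_def by simp
    have "S - of_int c / 2 = of_int (2*(-1)^N*T - c*80^N) / of_int (2*80^N)"
      unfolding S_def sum_conv N_def[symmetric] T_def[symmetric] by (simp add: field_simps)
    then show ?thesis unfolding rat_cong_def using rat_from_int[OF pr nD _ M] by simp
  qed
  have m20: "p mod 20 \<in> {1,3,7,9,11,13,17,19}"
  proof -
    have "p mod 5 \<noteq> 0"
    proof
      assume "p mod 5 = 0"
      then have "5 dvd p" by auto
      then show False using pr p5 by (auto simp: prime_nat_iff)
    qed
    moreover have "odd (p mod 20)" using od by (simp add: odd_iff_mod_2_eq_one mod_mod_cancel)
    moreover have "p mod 20 < 20" by simp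
    moreover have "p mod 20 mod 5 = p mod 5" by (simp add: mod_mod_cancel)
    ultimately show ?thesis using mod20_cases[of "p mod 20"] by simp
  qed
  have c1: "int p dvd 2*(-1)^N*U - 2*5^N" if "p mod 5 = 1"
  proof -
    have "p mod 20 = 1 \<or> p mod 20 = 11" using m20 that mod_mod_cancel[of 5 20 p] by auto
    then show ?thesis
    proof
      assume h: "p mod 20 = 1"
      show ?thesis unfolding N_def n_def U_def
        by (rule case_apply[OF pr od p5 G1[OF pr od h] S1[OF pr od h]]) (use h mod_mod_cancel[of 4 20 p] in simp)
    next
      assume h: "p mod 20 = 11"
      show ?thesis unfolding N_def n_def U_def
        by (rule case_apply[OF pr od p5 G11[OF pr od h] S11[OF pr od h]]) (use h mod_mod_cancel[of 4 20 p] in simp)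
    qed
  qed
  have c4: "int p dvd 2*(-1)^N*U - (-2)*5^N" if "p mod 5 = 4"
  proof -
    have "p mod 20 = 9 \<or> p mod 20 = 19" using m20 that mod_mod_cancel[of 5 20 p] by auto
    then show ?thesis
    proof
      assume h: "p mod 20 = 9"
      show ?thesis unfolding N_def n_def U_def
        by (rule case_apply[OF pr od p5 G9[OF pr od h] S9[OF pr od h]]) (use h mod_mod_cancel[of 4 20 p] in simp)
    next
      assume h: "p mod 20 = 19"
      show ?thesis unfolding N_def n_def U_def
        by (rule case_apply[OF pr od p5 G19[OF pr od h] S19[OF pr od h]]) (use h mod_mod_cancel[of 4 20 p] in simp)
    qed
  qed
  have c2: "int p dvd 2*(-1)^N*U - 1*5^N" if "p mod 5 = 2"
  proof -
    have "p mod 20 = 7 \<or> p mod 20 = 17" using m20 that mod_mod_cancel[of 5 20 p] by auto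
    then show ?thesis
    proof
      assume h: "p mod 20 = 7"
      show ?thesis unfolding N_def n_def U_def
        by (rule case_apply[OF pr od p5 G7[OF pr od h] S7[OF pr od h]]) (use h mod_mod_cancel[of 4 20 p] in simp)
    next
      assume h: "p mod 20 = 17"
      show ?thesis unfolding N_def n_def U_def
        by (rule case_apply[OF pr od p5 G17[OF pr od h] S17[OF pr od h]]) (use h mod_mod_cancel[of 4 20 p] in simp)
    qed
  qed
  have c3: "int p dvd 2*(-1)^N*U - (-1)*5^N" if "p mod 5 = 3"
  proof -
    have "p mod 20 = 3 \<or> p mod 20 = 13" using m20 that mod_mod_cancel[of 5 20 p] by auto
    then show ?thesis
    proof
      assume h: "p mod 20 = 3"
      show ?thesis unfolding N_def n_def U_def
        by (rule case_apply[OF pr od p5 G3[OF pr od h] S3[OF pr od h]]) (use h mod_mod_cancel[of 4 20 p] in simp)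
    next
      assume h: "p mod 20 = 13"
      show ?thesis unfolding N_def n_def U_def
        by (rule case_apply[OF pr od p5 G13[OF pr od h] S13[OF pr od h]]) (use h mod_mod_cancel[of 4 20 p] in simp)
    qed
  qed
  show ?thesis
  proof (intro conjI impI)
    assume "p mod 5 = 1"
    then show "rat_cong S 1 (int p)" using gen[OF c1] by simp
  next
    assume "p mod 5 = 4"
    then show "rat_cong S (-1) (int p)" using gen[OF c4] by simp
  next
    assume "p mod 5 = 2"
    then show "rat_cong S (1/2) (int p)" using gen[OF c2] by simp
  next
    assume "p mod 5 = 3"
    then show "rat_cong S (-1/2) (int p)" using gen[OF c3] by simp
  qed
qed

end
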